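(* Let $\mathcal{H}$ be a real Hilbert space, $\Gamma\subseteq\mathbb{R}_{++}$ a nonempty closed interval, $A_1:\mathcal{H}\to\mathcal{H}$ maximally monotone and $L$-Lipschitz, and $A_2:\mathcal{H}\rightrightarrows\mathcal{H}$ maximally $\mu$-strongly monotone, with $\mathcal{P}:=\operatorname{zer}(A_1+A_2)\neq\emptyset$. Let $\mathcal{D}:=\operatorname{zer}(A_1^{-1}-A_2^{-1}\circ(-\mathrm{Id}))$, let $(\gamma_n)_{n\in\mathbb{N}}\subseteq\Gamma$ converge $R$-linearly to $\gamma^*\in\Gamma$, and let $T_\gamma:=\mathrm{Id}-J_{\gamma A_1}+J_{\gamma A_2}(2J_{\gamma A_1}-\mathrm{Id})$. Given $x_0\in\mathcal{H}$, set $z_0:=J_{\gamma_0A_1}x_0$ and for $n\in\mathbb{N}$ define $y_n:=J_{\gamma_nA_2}(2z_n-x_n)$, $w_n:=x_n-z_n+y_n$, $z_{n+1}:=J_{\gamma_nA_1}w_n$, $x_{n+1}:=\frac{\gamma_{n+1}}{\gamma_n}w_n+\big(1-\frac{\gamma_{n+1}}{\gamma_n}\big)z_{n+1}$. Then: (i) $(x_n)$ and $(w_n)$ converge $R$-linearly to the same point $x\in\operatorname{Fix}T_{\gamma^*}$; (ii) $(z_n)$ and $(y_n)$ converge $R$-linearly to the same point $z:=J_{\gamma^*A_1}x\in\mathcal{P}$; (iii) $\big(\frac{x_n-z_n}{\gamma_n}\big)$ and $\big(\frac{w_n-y_n}{\gamma_n}\big)$ converge $R$-linearly to $g:=\fr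ac{x-z}{\gamma^*}\in\mathcal{D}$.
   Context: $\operatorname{zer}A=\{x:0\in Ax\}$; $J_A=(\mathrm{Id}+A)^{-1}$; $A^{-1}$ is the inverse operator; $\operatorname{Fix}T=\{x:Tx=x\}$. $A_2$ is $\mu$-strongly monotone if $\langle x-y,u-v\rangle\ge\mu\|x-y\|^2$ for all $(x,u),(y,v)\in\operatorname{gra}A_2$. A sequence $(a_n)$ converges $R$-linearly to $a$ if there exist $C\ge0$, $r\in(0,1)$ with $\|a_n-a\|\le Cr^n$ for all $n$. *)

theory Defs
  imports "HOL-Analysis.Analysis"
begin

text \<open>Set-valued operators on a real Hilbert space are represented by their graphs.\<close>

definition graph_of :: "('a \<Rightarrow> 'a) \<Rightarrow> ('a \<times> 'a) set" where
  "graph_of f = {(x, f x) | x. True}"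

definition monotone_op :: "('a::real_inner \<times> 'a) set \<Rightarrow> bool" where
  "monotone_op G \<longleftrightarrow> (\<forall>(x,u)\<in>G. \<forall>(y,v)\<in>G. 0 \<le> inner (x - y) (u - v))"

definition max_monotone :: "('a::real_inner \<times> 'a) set \<Rightarrow> bool" where
  "max_monotone G \<longleftrightarrow> monotone_op G \<and> (\<forall>G'. monotone_op G' \<and> G \<subseteq> G' \<longrightarrow> G' = G)"

definition strongly_monotone_op :: "real \<Rightarrow> ('a::real_inner \<times> 'a) set \<Rightarrow> bool" where
  "strongly_monotone_op \<mu> G \<longleftrightarrow>
     (\<forall>(x,u)\<in>G. \<forall>(y,v)\<in>G. \<mu> * (norm (x - y))\<^sup>2 \<le> inner (x - y) (u - v))"

definition zer :: "('a::real_vector \<times> 'a) set \<Rightarrow> 'a set" where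
  "zer G = {x. (x, 0) \<in> G}"

definition op_add :: "('a::real_vector \<times> 'a) set \<Rightarrow> ('a \<times> 'a) set \<Rightarrow> ('a \<times> 'a) set" where
  "op_add G H = {(x, u + v) | x u v. (x, u) \<in> G \<and> (x, v) \<in> H}"

definition op_diff :: "('a::real_vector \<times> 'a) set \<Rightarrow> ('a \<times> 'a) set \<Rightarrow> ('a \<times> 'a) set" where
  "op_diff G H = {(x, u - v) | x u v. (x, u) \<in> G \<and> (x, v) \<in> H}"

definition op_inv :: "('a \<times> 'a) set \<Rightarrow> ('a \<times> 'a) set" where
  "op_inv G = {(u, x) | x u. (x, u) \<in> G}"

definition op_comp_neg :: "('a::real_vector \<times> 'a) set \<Rightarrow> ('a \<times> 'a) set" where
  "op_comp_neg G = {(x, u) | x u. (- x, u) \<in> G}"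

definition op_scale :: "real \<Rightarrow> ('a::real_vector \<times> 'a) set \<Rightarrow> ('a \<times> 'a) set" where
  "op_scale c G = {(x, c *\<^sub>R u) | x u. (x, u) \<in> G}"

text \<open>Resolvent \<open>J_A = (Id + A)^{-1}\<close>, evaluated as the (unique, for maximally monotone A) point.\<close>
definition resolvent :: "('a::real_vector \<times> 'a) set \<Rightarrow> 'a \<Rightarrow> 'a" where
  "resolvent G x = (THE p. (p, x - p) \<in> G)"

definition Fix :: "('a \<Rightarrow> 'a) \<Rightarrow> 'a set" where
  "Fix T = {x. T x = x}"

definition R_linear_conv :: "(nat \<Rightarrow> 'a::real_normed_vector) \<Rightarrow> 'a \<Rightarrow> bool" where
  "R_linear_conv a l \<longleftrightarrow> (\<exists>C r. 0 \<le> C \<and> 0 < r \<and> r < 1 \<and> (\<forall>n. norm (a n - l) \<le> C * r ^ n))"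

end

theory Submission
  imports Defs
begin

lemma weights_image:
  fixes b :: "'i \<Rightarrow> 'a::real_vector"
  assumes fin: "finite I" and y: "y \<in> convex hull (b ` I)"
  shows "\<exists>l. (\<forall>i\<in>I. 0 \<le> l i) \<and> sum l I = 1 \<and> (\<Sum>i\<in>I. l i *\<^sub>R b i) = y"
proof -
  obtain u where u: "\<forall>x\<in>b`I. 0 \<le> u x" "sum u (b`I) = 1" "(\<Sum>x\<in>b`I. u x *\<^sub>R x) = y"
    using y unfolding convex_hull_finite[OF finite_imageI[OF fin]] mem_Collect_eq by blast
  define l where "l i = u (b i) / real (card {j\<in>I. b j = b i})" for i
  have cpos: "card {j\<in>I. b j = \<beta>} > 0" if "\<beta> \<in> b ` I" for \<beta>
    using that fin by (auto simp: card_gt_0_iff)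
  have l1: "sum l {i\<in>I. b i = \<beta>} = u \<beta>" if "\<beta> \<in> b ` I" for \<beta>
  proof -
    have "sum l {i\<in>I. b i = \<beta>} = (\<Sum>i\<in>{i\<in>I. b i = \<beta>}. u \<beta> / real (card {j\<in>I. b j = \<beta>}))"
      by (rule sum.cong) (auto simp: l_def)
    also have "\<dots> = u \<beta>" using cpos[OF that] by simp
    finally show ?thesis .
  qed
  have l2: "(\<Sum>i\<in>{i\<in>I. b i = \<beta>}. l i *\<^sub>R b i) = u \<beta> *\<^sub>R \<beta>" if "\<beta> \<in> b ` I" for \<beta>
  proof -
    have "(\<Sum>i\<in>{i\<in>I. b i = \<beta>}. l i *\<^sub>R b i) = (\<Sum>i\<in>{i\<in>I. b i = \<beta>}. l i *\<^sub>R \<beta>)"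
      by (rule sum.cong) auto
    also have "\<dots> = (\<Sum>i\<in>{i\<in>I. b i = \<beta>}. l i) *\<^sub>R \<beta>"
      by (rule scaleR_sum_left[symmetric])
    finally have "(\<Sum>i\<in>{i\<in>I. b i = \<beta>}. l i *\<^sub>R b i) = (\<Sum>i\<in>{i\<in>I. b i = \<beta>}. l i) *\<^sub>R \<beta>" .
    then show ?thesis using l1[OF that] by simp
  qed
  have "sum l I = (\<Sum>\<beta>\<in>b`I. sum l {i\<in>I. b i = \<beta>})"
    by (rule sum.image_gen[OF fin])
  also have "\<dots> = sum u (b`I)" by (rule sum.cong) (auto simp: l1)
  finally have s1: "sum l I = 1" using u by simp
  have "(\<Sum>i\<in>I. l i *\<^sub>R b i) = (\<Sum>\<beta>\<in>b`I. (\<Sum>i\<in>{i\<in>I. b i = \<beta>}. l i *\<^sub>R b i))"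
    by (rule sum.image_gen[OF fin])
  also have "\<dots> = (\<Sum>x\<in>b`I. u x *\<^sub>R x)" by (rule sum.cong[OF refl], rule l2, assumption)
  finally have s2: "(\<Sum>i\<in>I. l i *\<^sub>R b i) = y" using u by simp
  have "\<forall>i\<in>I. 0 \<le> l i" using u by (auto simp: l_def)
  with s1 s2 show ?thesis by blast
qed

lemma continuous_on_Max_fam:
  fixes g :: "'i \<Rightarrow> 'a::topological_space \<Rightarrow> real"
  assumes "finite F" "F \<noteq> {}" "\<And>i. i \<in> F \<Longrightarrow> continuous_on K (g i)"
  shows "continuous_on K (\<lambda>c. Max ((\<lambda>i. g i c) ` F))"
  using assms
proof (induction F rule: finite_ne_induct)
  case (singleton x)
  then show ?case by simp
next
  case (insert x F)
  have "continuous_on K (\<lambda>c. max (g x c) (Max ((\<lambda>i. g i c) ` F)))"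
    using insert by (intro continuous_on_max) auto
  moreover have "Max ((\<lambda>i. g i c) ` insert x F) = max (g x c) (Max ((\<lambda>i. g i c) ` F))" for c
    using insert by (simp add: Max_insert)
  ultimately show ?case by simp
qed

lemma proj_exists:
  fixes S :: "'a::real_inner set"
  assumes "compact S" "convex S" "S \<noteq> {}"
  shows "\<exists>p\<in>S. \<forall>q\<in>S. inner (x - p) (q - p) \<le> 0"
proof -
  have "continuous_on S (\<lambda>q. norm (x - q))" by (intro continuous_intros)
  then obtain p where p: "p \<in> S" "\<forall>q\<in>S. norm (x - p) \<le> norm (x - q)"
    using continuous_attains_inf[OF assms(1) assms(3), of "\<lambda>q. norm (x - q)"] by blast
  have "inner (x - p) (q - p) \<le> 0" if q: "q \<in> S" for q
  proof (rule ccontr)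
    assume "\<not> ?thesis"
    then have pos: "inner (x - p) (q - p) > 0" by simp
    define d where "d = q - p"
    have dpos: "inner d d > 0" using pos by (auto simp: d_def)
    define s where "s = min 1 (inner (x - p) d / inner d d)"
    have s0: "0 < s" "s \<le> 1" using pos dpos by (auto simp: s_def d_def)
    have sd: "s * inner d d \<le> inner (x - p) d"
      using dpos by (auto simp: s_def min_def field_simps)
    have mem: "p + s *\<^sub>R d \<in> S"
    proof -
      have "(1 - s) *\<^sub>R p + s *\<^sub>R q \<in> S"
        using assms(2) p(1) q s0 by (simp add: convex_def)
      moreover have "(1 - s) *\<^sub>R p + s *\<^sub>R q = p + s *\<^sub>R d"
        by (simp add: d_def algebra_simps)
      ultimately show ?thesis by simp
    qed
    have "(norm (x - (p + s *\<^sub>R d)))\<^sup>2 = (norm (x - p))\<^sup>2 - 2 * s * inner (x - p) d + s * s * inner d d"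
      by (simp add: power2_norm_eq_inner inner_diff_left inner_diff_right inner_add_left inner_add_right inner_commute algebra_simps)
    also have "\<dots> < (norm (x - p))\<^sup>2"
    proof -
      have "s * s * inner d d \<le> s * inner (x - p) d" using sd s0
        by (metis mult.assoc mult_left_mono less_imp_le)
      moreover have "s * inner (x - p) d > 0" using s0 pos by (simp add: d_def)
      ultimately show ?thesis by linarith
    qed
    finally have "norm (x - (p + s *\<^sub>R d)) < norm (x - p)"
      using power_less_imp_less_base norm_ge_zero by blast
    then show False using p(2) mem by force
  qed
  then show ?thesis using p(1) by blast
qed


lemma var_identity:
  fixes v :: "'i \<Rightarrow> 'a::real_inner"
  assumes fin: "finite I" and s1: "sum l I = 1"
  shows "(\<Sum>i\<in>I. \<Sum>j\<in>I. l i * l j * (norm (v i - v j))\<^sup>2)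
         = 2 * (\<Sum>i\<in>I. l i * (norm (v i - m))\<^sup>2) - 2 * (norm ((\<Sum>i\<in>I. l i *\<^sub>R v i) - m))\<^sup>2"
proof -
  define u where "u i = v i - m" for i
  have e1: "(norm (v i - v j))\<^sup>2 = (norm (u i))\<^sup>2 + (norm (u j))\<^sup>2 - 2 * inner (u i) (u j)" for i j
    unfolding u_def power2_norm_eq_inner
    by (simp add: inner_diff_left inner_diff_right inner_commute algebra_simps)
  have S: "(\<Sum>i\<in>I. l i *\<^sub>R v i) - m = (\<Sum>i\<in>I. l i *\<^sub>R u i)"
  proof -
    have "(\<Sum>i\<in>I. l i *\<^sub>R u i) = (\<Sum>i\<in>I. l i *\<^sub>R v i) - (\<Sum>i\<in>I. l i *\<^sub>R m)"
      by (simp add: u_def scaleR_diff_right sum_subtractf)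
    also have "(\<Sum>i\<in>I. l i *\<^sub>R m) = m" using s1 by (simp add: scaleR_sum_left[symmetric])
    finally show ?thesis by simp
  qed
  have n2: "(norm (\<Sum>i\<in>I. l i *\<^sub>R u i))\<^sup>2 = (\<Sum>i\<in>I. \<Sum>j\<in>I. l i * l j * inner (u i) (u j))"
    unfolding power2_norm_eq_inner
    apply (simp add: inner_sum_left inner_sum_right sum_distrib_left mult.assoc)
    apply (rule sum.cong[OF refl], rule sum.cong[OF refl])
    apply (simp add: inner_commute)
    done
  have a1: "(\<Sum>i\<in>I. \<Sum>j\<in>I. l i * l j * (norm (u i))\<^sup>2) = (\<Sum>i\<in>I. l i * (norm (u i))\<^sup>2)"
  proof -
    have e: "(\<Sum>j\<in>I. l i * l j * c) = l i * c * sum l I" for i c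
      by (simp add: sum_distrib_left mult_ac)
    have "(\<Sum>i\<in>I. \<Sum>j\<in>I. l i * l j * (norm (u i))\<^sup>2) = (\<Sum>i\<in>I. l i * (norm (u i))\<^sup>2 * (\<Sum>j\<in>I. l j))"
      unfolding e ..
    then show ?thesis using s1 by simp
  qed
  have a2: "(\<Sum>i\<in>I. \<Sum>j\<in>I. l i * l j * (norm (u j))\<^sup>2) = (\<Sum>i\<in>I. l i * (norm (u i))\<^sup>2)"
  proof -
    have "(\<Sum>i\<in>I. \<Sum>j\<in>I. l i * l j * (norm (u j))\<^sup>2) = (\<Sum>i\<in>I. l i * (\<Sum>j\<in>I. l j * (norm (u j))\<^sup>2))"
      by (simp add: sum_distrib_left mult_ac)
    also have "\<dots> = (\<Sum>i\<in>I. l i) * (\<Sum>j\<in>I. l j * (norm (u j))\<^sup>2)"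
      by (simp add: sum_distrib_right)
    finally show ?thesis using s1 by simp
  qed
  have "(\<Sum>i\<in>I. \<Sum>j\<in>I. l i * l j * (norm (v i - v j))\<^sup>2)
      = (\<Sum>i\<in>I. \<Sum>j\<in>I. l i * l j * (norm (u i))\<^sup>2) + (\<Sum>i\<in>I. \<Sum>j\<in>I. l i * l j * (norm (u j))\<^sup>2)
        - 2 * (\<Sum>i\<in>I. \<Sum>j\<in>I. l i * l j * inner (u i) (u j))"
    unfolding e1 by (simp add: algebra_simps sum.distrib sum_subtractf sum_distrib_left)
  also have "\<dots> = 2 * (\<Sum>i\<in>I. l i * (norm (u i))\<^sup>2) - 2 * (norm (\<Sum>i\<in>I. l i *\<^sub>R u i))\<^sup>2"
    unfolding a1 a2 n2 by simp
  finally show ?thesis unfolding S u_def .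
qed


lemma kirszbraun_finite:
  fixes a b :: "'i \<Rightarrow> 'a::real_inner"
  assumes fin: "finite F" and ne: "\<forall>i\<in>F. \<forall>j\<in>F. norm (b i - b j) \<le> norm (a i - a j)"
  shows "\<exists>c. \<forall>i\<in>F. norm (c - b i) \<le> norm (w - a i)"
proof (cases "F = {} \<or> (\<exists>i\<in>F. a i = w)")
  case True
  then show ?thesis
  proof
    assume "F = {}" then show ?thesis by simp
  next
    assume "\<exists>i\<in>F. a i = w"
    then obtain i where i: "i \<in> F" "a i = w" by blast
    have "\<forall>j\<in>F. norm (b i - b j) \<le> norm (w - a j)" using ne i by auto
    then show ?thesis by blast
  qed
next
  case False
  define r where "r i = norm (w - a i)" for i
  have rpos: "r i > 0" if "i \<in> F" for i using False that by (auto simp: r_def)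
  have Fne: "F \<noteq> {}" using False by blast
  define f where "f c = Max ((\<lambda>i. norm (c - b i) / r i) ` F)" for c
  define K where "K = convex hull (b ` F)"
  have Kc: "compact K" unfolding K_def by (rule finite_imp_compact_convex_hull) (use fin in auto)
  have Kv: "convex K" unfolding K_def by simp
  have Kne: "K \<noteq> {}" unfolding K_def using Fne by simp
  have fcont: "continuous_on K f"
    unfolding f_def
  proof (rule continuous_on_Max_fam[OF fin Fne])
    fix i assume "i \<in> F"
    then have "r i \<noteq> 0" using rpos by force
    then show "continuous_on K (\<lambda>c. norm (c - b i) / r i)" by (intro continuous_intros) auto
  qed
  obtain c0 where c0: "c0 \<in> K" "\<forall>c\<in>K. f c0 \<le> f c"
    using continuous_attains_inf[OF Kc Kne fcont] by blast
  define t where "t = f c0"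
  have le: "norm (c0 - b i) \<le> t * r i" if "i \<in> F" for i
  proof -
    have "norm (c0 - b i) / r i \<le> t" unfolding t_def f_def using fin that by (intro Max_ge) auto
    then show ?thesis using rpos[OF that] by (simp add: field_simps)
  qed
  have t1: "t \<le> 1"
  proof (rule ccontr)
    assume "\<not> t \<le> 1"
    then have tgt: "t > 1" by simp
    define I where "I = {i\<in>F. norm (c0 - b i) = t * r i}"
    have Ifin: "finite I" using fin by (simp add: I_def)
    have Isub: "I \<subseteq> F" by (auto simp: I_def)
    have Ine: "I \<noteq> {}"
    proof -
      have "t \<in> (\<lambda>i. norm (c0 - b i) / r i) ` F" unfolding t_def f_def using fin Fne by (intro Max_in) auto
      then obtain i where i: "i \<in> F" "t = norm (c0 - b i) / r i" by blast
      then have "norm (c0 - b i) = t * r i" using rpos[OF i(1)] by (simp add: field_simps)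
      with i show ?thesis by (auto simp: I_def)
    qed
    have inhull: "c0 \<in> convex hull (b ` I)"
    proof (rule ccontr)
      assume nin: "c0 \<notin> convex hull (b ` I)"
      define H where "H = convex hull (b ` I)"
      have Hc: "compact H" unfolding H_def by (rule finite_imp_compact_convex_hull) (use Ifin in auto)
      have Hne: "H \<noteq> {}" unfolding H_def using Ine by simp
      obtain p where p: "p \<in> H" "\<forall>q\<in>H. inner (c0 - p) (q - p) \<le> 0"
        using proj_exists[OF Hc _ Hne, of c0] unfolding H_def by auto
      have pK: "p \<in> K" using p(1) Isub unfolding H_def K_def by (meson hull_mono image_mono subsetD)
      define d where "d = p - c0"
      have dne: "d \<noteq> 0" using p(1) nin by (auto simp: d_def H_def)
      have dd: "inner d d > 0" using dne by simp
      have act: "inner (b i - c0) d \<ge> inner d d" if "i \<in> I" for i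
      proof -
        have "b i \<in> H" unfolding H_def using that by (simp add: hull_inc)
        then have "inner (c0 - p) (b i - p) \<le> 0" using p(2) by blast
        moreover have "inner (b i - c0) d = inner d d - inner (c0 - p) (b i - p)"
          by (simp add: d_def inner_diff_left inner_diff_right inner_commute algebra_simps)
        ultimately show ?thesis by simp
      qed
      define \<eta> where "\<eta> = Min (insert 1 ((\<lambda>i. t * r i - norm (c0 - b i)) ` (F - I)))"
      have \<eta>pos: "\<eta> > 0"
      proof -
        have "t * r i - norm (c0 - b i) > 0" if "i \<in> F - I" for i
          using le[of i] that by (auto simp: I_def)
        then show ?thesis unfolding \<eta>_def using fin by (subst Min_gr_iff) auto
      qed
      have \<eta>le: "\<eta> \<le> t * r i - norm (c0 - b i)" if "i \<in> F - I" for i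
        unfolding \<eta>_def using fin that by (intro Min_le) auto
      define s where "s = min 1 (\<eta> / (2 * norm d))"
      have s0: "0 < s" "s \<le> 1" using \<eta>pos dne by (auto simp: s_def)
      have snd: "s * norm d < \<eta>"
      proof -
        have "s * norm d \<le> (\<eta> / (2 * norm d)) * norm d"
          by (rule mult_right_mono) (auto simp: s_def)
        also have "\<dots> = \<eta> / 2" using dne by simp
        finally show ?thesis using \<eta>pos by simp
      qed
      define c1 where "c1 = c0 + s *\<^sub>R d"
      have c1K: "c1 \<in> K"
      proof -
        have "(1 - s) *\<^sub>R c0 + s *\<^sub>R p \<in> K" using Kv c0(1) pK s0 by (simp add: convex_def)
        moreover have "(1 - s) *\<^sub>R c0 + s *\<^sub>R p = c1" by (simp add: c1_def d_def algebra_simps)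
        ultimately show ?thesis by simp
      qed
      have lt: "norm (c1 - b i) / r i < t" if "i \<in> F" for i
      proof (cases "i \<in> I")
        case True
        have eq: "(norm (c1 - b i))\<^sup>2 = (norm (c0 - b i))\<^sup>2 - 2 * s * inner (b i - c0) d + s * s * inner d d"
          unfolding c1_def power2_norm_eq_inner
          by (simp add: inner_diff_left inner_diff_right inner_add_left inner_add_right inner_commute algebra_simps)
        have "s * s * inner d d \<le> s * inner d d" using s0 dd by (simp add: mult_right_le_one_le)
        moreover have "s * inner d d \<le> s * inner (b i - c0) d" using act[OF True] s0 by simp
        moreover have "0 < s * inner d d" using s0 dd by simp
        ultimately have "(norm (c1 - b i))\<^sup>2 < (norm (c0 - b i))\<^sup>2" unfolding eq by linarith
        then have "norm (c1 - b i) < norm (c0 - b i)" using power_less_imp_less_base norm_ge_zero by blast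
        also have "\<dots> = t * r i" using True by (simp add: I_def)
        finally show ?thesis using rpos[OF that] by (simp add: field_simps)
      next
        case False
        have "norm (c1 - b i) \<le> norm (c0 - b i) + norm (s *\<^sub>R d)"
          unfolding c1_def by (metis add_diff_eq diff_add_eq norm_triangle_ineq add.commute)
        also have "norm (s *\<^sub>R d) = s * norm d" using s0 by simp
        finally have "norm (c1 - b i) < norm (c0 - b i) + \<eta>" using snd by simp
        also have "\<dots> \<le> t * r i" using \<eta>le[of i] that False by simp
        finally show ?thesis using rpos[OF that] by (simp add: field_simps)
      qed
      have "f c1 < t" unfolding f_def using fin Fne lt by (subst Max_less_iff) auto
      moreover have "f c0 \<le> f c1" using c0(2) c1K by blast
      ultimately show False unfolding t_def by simp
    qed
    obtain l where l: "\<forall>i\<in>I. 0 \<le> l i" "sum l I = 1" "(\<Sum>i\<in>I. l i *\<^sub>R b i) = c0"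
      using weights_image[OF Ifin inhull] by blast
    have Lb: "(\<Sum>i\<in>I. \<Sum>j\<in>I. l i * l j * (norm (b i - b j))\<^sup>2) = 2 * (\<Sum>i\<in>I. l i * (t * r i)\<^sup>2)"
    proof -
      have "(\<Sum>i\<in>I. \<Sum>j\<in>I. l i * l j * (norm (b i - b j))\<^sup>2)
            = 2 * (\<Sum>i\<in>I. l i * (norm (b i - c0))\<^sup>2) - 2 * (norm ((\<Sum>i\<in>I. l i *\<^sub>R b i) - c0))\<^sup>2"
        by (rule var_identity[OF Ifin l(2)])
      also have "(\<Sum>i\<in>I. l i * (norm (b i - c0))\<^sup>2) = (\<Sum>i\<in>I. l i * (t * r i)\<^sup>2)"
        by (rule sum.cong) (auto simp: I_def norm_minus_commute)
      finally show ?thesis using l(3) by simp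
    qed
    have La: "(\<Sum>i\<in>I. \<Sum>j\<in>I. l i * l j * (norm (a i - a j))\<^sup>2) \<le> 2 * (\<Sum>i\<in>I. l i * (r i)\<^sup>2)"
    proof -
      have "(\<Sum>i\<in>I. \<Sum>j\<in>I. l i * l j * (norm (a i - a j))\<^sup>2)
            = 2 * (\<Sum>i\<in>I. l i * (norm (a i - w))\<^sup>2) - 2 * (norm ((\<Sum>i\<in>I. l i *\<^sub>R a i) - w))\<^sup>2"
        by (rule var_identity[OF Ifin l(2)])
      also have "(\<Sum>i\<in>I. l i * (norm (a i - w))\<^sup>2) = (\<Sum>i\<in>I. l i * (r i)\<^sup>2)"
        by (rule sum.cong) (auto simp: r_def norm_minus_commute)
      finally show ?thesis by simp
    qed
    have Lba: "(\<Sum>i\<in>I. \<Sum>j\<in>I. l i * l j * (norm (b i - b j))\<^sup>2) \<le> (\<Sum>i\<in>I. \<Sum>j\<in>I. l i * l j * (norm (a i - a j))\<^sup>2)"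
    proof (intro sum_mono mult_left_mono)
      fix i j assume "i \<in> I" "j \<in> I"
      then show "(norm (b i - b j))\<^sup>2 \<le> (norm (a i - a j))\<^sup>2" "0 \<le> l i * l j"
        using ne Isub l(1) by (auto intro: power_mono)
    qed
    have "(\<Sum>i\<in>I. l i * (t * r i)\<^sup>2) = t\<^sup>2 * (\<Sum>i\<in>I. l i * (r i)\<^sup>2)"
      by (simp add: sum_distrib_left power_mult_distrib mult_ac)
    then have ineq: "t\<^sup>2 * (\<Sum>i\<in>I. l i * (r i)\<^sup>2) \<le> (\<Sum>i\<in>I. l i * (r i)\<^sup>2)"
      using Lb La Lba by linarith
    have pos: "(\<Sum>i\<in>I. l i * (r i)\<^sup>2) > 0"
    proof -
      obtain i where i: "i \<in> I" "l i > 0"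
      proof (rule ccontr)
        assume "\<not> thesis"
        then have "\<forall>i\<in>I. l i \<le> 0" using that by force
        then have "sum l I \<le> 0" by (simp add: sum_nonpos)
        then show False using l(2) by simp
      qed
      show ?thesis
      proof (rule sum_pos2[OF Ifin i(1)])
        have "r i > 0" using i(1) Isub rpos by blast
        then show "0 < l i * (r i)\<^sup>2" using i(2) by simp
        show "\<And>j. j \<in> I \<Longrightarrow> 0 \<le> l j * (r j)\<^sup>2" using l(1) by simp
      qed
    qed
    have "t\<^sup>2 \<le> 1" using ineq pos by (simp add: mult_le_cancel_right1)
    moreover have "t\<^sup>2 > 1" using tgt by (simp add: one_less_power)
    ultimately show False by simp
  qed
  have "\<forall>i\<in>F. norm (c0 - b i) \<le> norm (w - a i)"
  proof
    fix i assume i: "i \<in> F"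
    have "norm (c0 - b i) \<le> t * r i" by (rule le[OF i])
    also have "\<dots> \<le> r i" using t1 rpos[OF i] by (simp add: mult_le_cancel_right1)
    finally show "norm (c0 - b i) \<le> norm (w - a i)" by (simp add: r_def)
  qed
  then show ?thesis by blast
qed

lemma parallelogram':
  fixes p q :: "'a::real_inner"
  shows "(norm (p - q))\<^sup>2 = 2 * (norm p)\<^sup>2 + 2 * (norm q)\<^sup>2 - 4 * (norm ((1/2) *\<^sub>R (p + q)))\<^sup>2"
  unfolding power2_norm_eq_inner
  by (simp add: inner_diff_left inner_diff_right inner_add_left inner_add_right inner_commute algebra_simps)

lemma balls_fip:
  fixes c :: "'i \<Rightarrow> 'a::{real_inner,complete_space}" and \<rho> :: "'i \<Rightarrow> real"
  assumes fip: "\<And>F. finite F \<Longrightarrow> F \<subseteq> S \<Longrightarrow> \<exists>x. \<forall>i\<in>F. norm (x - c i) \<le> \<rho> i"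
  shows "\<exists>x. \<forall>i\<in>S. norm (x - c i) \<le> \<rho> i"
proof (cases "S = {}")
  case True then show ?thesis by simp
next
  case False
  then obtain i0 where i0: "i0 \<in> S" by blast
  define Q where "Q F = {x. \<forall>i\<in>F. norm (x - c i) \<le> \<rho> i}" for F
  define m where "m F = Inf ((\<lambda>x. (norm x)\<^sup>2) ` Q F)" for F
  have Qne: "Q F \<noteq> {}" if "finite F" "F \<subseteq> S" for F
    using fip[OF that] by (auto simp: Q_def)
  have Qanti: "Q G \<subseteq> Q F" if "F \<subseteq> G" for F G using that by (auto simp: Q_def)
  have bdd: "bdd_below ((\<lambda>x. (norm x)\<^sup>2) ` Q F)" for F
    by (rule bdd_belowI[of _ 0]) auto
  have mle: "m F \<le> (norm x)\<^sup>2" if "x \<in> Q F" for F x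
    unfolding m_def using that bdd by (intro cInf_lower) auto
  have mmono: "m F \<le> m G" if "finite G" "G \<subseteq> S" "F \<subseteq> G" for F G
    unfolding m_def using Qne[OF that(1,2)] bdd Qanti[OF that(3)]
    by (intro cInf_superset_mono) auto
  have mapprox: "\<exists>x\<in>Q F. (norm x)\<^sup>2 < m F + e" if F: "finite F" "F \<subseteq> S" and e: "e > 0" for F e
  proof -
    have "Inf ((\<lambda>x. (norm x)\<^sup>2) ` Q F) < m F + e" using e by (simp add: m_def)
    then obtain y where "y \<in> (\<lambda>x. (norm x)\<^sup>2) ` Q F" "y < m F + e"
      using cInf_lessD[of "(\<lambda>x. (norm x)\<^sup>2) ` Q F"] Qne[OF F] by blast
    then show ?thesis by blast
  qed
  define B where "B = (norm (c i0) + \<rho> i0)\<^sup>2"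
  have mbound: "m F \<le> B" if "finite F" "F \<subseteq> S" for F
  proof -
    have f2: "finite (insert i0 F)" "insert i0 F \<subseteq> S" using that i0 by auto
    obtain x where x: "x \<in> Q (insert i0 F)" using Qne[OF f2] by blast
    have t: "norm x \<le> norm (c i0) + norm (x - c i0)" by (rule norm_triangle_sub)
    have "norm (x - c i0) \<le> \<rho> i0" using x by (auto simp: Q_def)
    then have nx: "norm x \<le> norm (c i0) + \<rho> i0" using t by linarith
    have "(norm x)\<^sup>2 \<le> B" unfolding B_def by (intro power_mono nx norm_ge_zero)
    moreover have "m F \<le> m (insert i0 F)" by (rule mmono[OF f2]) auto
    moreover have "m (insert i0 F) \<le> (norm x)\<^sup>2" by (rule mle[OF x])
    ultimately show ?thesis by linarith
  qed
  define M where "M = {m F | F. finite F \<and> F \<subseteq> S}"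
  define d where "d = Sup M"
  have Mne: "M \<noteq> {}" unfolding M_def by auto
  have Mbdd: "bdd_above M" unfolding M_def using mbound by (intro bdd_aboveI[of _ B]) auto
  have mled: "m F \<le> d" if "finite F" "F \<subseteq> S" for F
    unfolding d_def using that Mbdd by (intro cSup_upper) (auto simp: M_def)
  have "\<exists>F. finite F \<and> F \<subseteq> S \<and> d - 1 / (real k + 1) < m F" for k :: nat
  proof -
    have "d - 1 / (real k + 1) < Sup M" unfolding d_def by simp
    then obtain y where "y \<in> M" "d - 1 / (real k + 1) < y" using less_cSupE[OF _ Mne] by blast
    then show ?thesis by (auto simp: M_def)
  qed
  then obtain Fs where Fs: "\<And>k. finite (Fs k)" "\<And>k. Fs k \<subseteq> S" "\<And>k. d - 1 / (real k + 1) < m (Fs k)"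
    by metis
  define G where "G k = (\<Union>j\<in>{..k}. Fs j)" for k
  have Gfin: "finite (G k)" for k using Fs(1) by (simp add: G_def)
  have GS: "G k \<subseteq> S" for k using Fs(2) by (auto simp: G_def)
  have Gmono: "G k \<subseteq> G l" if "k \<le> l" for k l unfolding G_def using that by (intro UN_mono) auto
  have mG: "d - 1 / (real k + 1) < m (G k)" for k
  proof -
    have "m (Fs k) \<le> m (G k)" by (rule mmono[OF Gfin GS]) (auto simp: G_def)
    then show ?thesis using Fs(3)[of k] by linarith
  qed
  have key: "(norm (q1 - q2))\<^sup>2 < 8 / (real k + 1)"
    if q: "q1 \<in> Q (G k)" "q2 \<in> Q (G k)" "(norm q1)\<^sup>2 < d + 1 / (real k + 1)" "(norm q2)\<^sup>2 < d + 1 / (real k + 1)"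
    for q1 q2 k
  proof -
    have mid: "(1/2) *\<^sub>R (q1 + q2) \<in> Q (G k)"
    proof -
      have "norm ((1/2) *\<^sub>R (q1 + q2) - c i) \<le> \<rho> i" if "i \<in> G k" for i
      proof -
        have ci: "c i = (1/2) *\<^sub>R c i + (1/2) *\<^sub>R c i" by (simp flip: scaleR_add_left)
        have "(1/2) *\<^sub>R (q1 + q2) - c i = (1/2) *\<^sub>R (q1 - c i) + (1/2) *\<^sub>R (q2 - c i)"
          by (subst (1) ci) (simp add: algebra_simps)
        moreover have "norm ((1/2) *\<^sub>R (q1 - c i) + (1/2) *\<^sub>R (q2 - c i)) \<le> norm ((1/2) *\<^sub>R (q1 - c i)) + norm ((1/2) *\<^sub>R (q2 - c i))"
          by (rule norm_triangle_ineq)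
        ultimately have "norm ((1/2) *\<^sub>R (q1 + q2) - c i) \<le> (1/2) * norm (q1 - c i) + (1/2) * norm (q2 - c i)"
          by simp
        moreover have "norm (q1 - c i) \<le> \<rho> i" "norm (q2 - c i) \<le> \<rho> i" using q(1,2) that by (auto simp: Q_def)
        ultimately show ?thesis by linarith
      qed
      then show ?thesis by (auto simp: Q_def)
    qed
    have "m (G k) \<le> (norm ((1/2) *\<^sub>R (q1 + q2)))\<^sup>2" by (rule mle[OF mid])
    then show ?thesis using mG[of k] q(3,4) parallelogram'[of q1 q2] by linarith
  qed
  have "\<exists>x. x \<in> Q (G k) \<and> (norm x)\<^sup>2 < d + 1 / (real k + 1)" for k
  proof -
    obtain x where "x \<in> Q (G k)" "(norm x)\<^sup>2 < m (G k) + 1 / (real k + 1)"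
      using mapprox[OF Gfin GS, of "1 / (real k + 1)"] by auto
    then show ?thesis using mled[OF Gfin GS, of k] by force
  qed
  then obtain p where p: "\<And>k. p k \<in> Q (G k)" "\<And>k. (norm (p k))\<^sup>2 < d + 1 / (real k + 1)"
    by metis
  have small: "\<exists>N::nat. 8 / (real N + 1) < e" if "e > 0" for e :: real
  proof -
    obtain N :: nat where "8 / e < real N" using reals_Archimedean2 by blast
    then have "8 < e * real N" using that by (simp add: field_simps)
    then have "8 < e * (real N + 1)" using that by (simp add: algebra_simps)
    then show ?thesis using that by (intro exI[of _ N]) (simp add: field_simps)
  qed
  have pp: "(norm (p k - p l))\<^sup>2 < 8 / (real k + 1)" if "k \<le> l" for k l
  proof (rule key)
    show "p k \<in> Q (G k)" by (rule p(1))
    show "p l \<in> Q (G k)" using p(1)[of l] Qanti[OF Gmono[OF that]] by blast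
    show "(norm (p k))\<^sup>2 < d + 1 / (real k + 1)" by (rule p(2))
    have "1 / (real l + 1) \<le> 1 / (real k + 1)" using that by (simp add: frac_le)
    then show "(norm (p l))\<^sup>2 < d + 1 / (real k + 1)" using p(2)[of l] by linarith
  qed
  have "Cauchy p"
  proof (rule metric_CauchyI)
    fix e :: real assume e: "e > 0"
    obtain N where N: "8 / (real N + 1) < e\<^sup>2" using small[of "e\<^sup>2"] e by auto
    have "dist (p k) (p l) < e" if "k \<ge> N" "l \<ge> N" for k l
    proof -
      have "(norm (p k - p l))\<^sup>2 < 8 / (real N + 1)"
      proof (cases "k \<le> l")
        case True
        have "8 / (real k + 1) \<le> 8 / (real N + 1)" using that by (simp add: frac_le)
        then show ?thesis using pp[OF True] by linarith
      next
        case False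
        have "8 / (real l + 1) \<le> 8 / (real N + 1)" using that by (simp add: frac_le)
        then show ?thesis using pp[of l k] False norm_minus_commute[of "p k" "p l"] by simp
      qed
      then have "(norm (p k - p l))\<^sup>2 < e\<^sup>2" using N by linarith
      then show ?thesis using e by (simp add: dist_norm power_less_imp_less_base)
    qed
    then show "\<exists>M. \<forall>m\<ge>M. \<forall>n\<ge>M. dist (p m) (p n) < e" by blast
  qed
  then obtain x where x: "p \<longlonglongrightarrow> x" using Cauchy_convergent_iff convergent_def by blast
  have "norm (x - c i) \<le> \<rho> i" if i: "i \<in> S" for i
  proof (rule ccontr)
    assume neg: "\<not> norm (x - c i) \<le> \<rho> i"
    define e where "e = norm (x - c i) - \<rho> i"
    have e: "e > 0" using neg by (simp add: e_def)
    obtain N1 where N1: "\<forall>k\<ge>N1. dist (p k) x < e / 2" using LIMSEQ_D[OF x, of "e/2"] e by (auto simp: dist_norm)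
    obtain N2 where N2: "8 / (real N2 + 1) < (e/2)\<^sup>2" using small[of "(e/2)\<^sup>2"] e by auto
    define k where "k = max N1 N2"
    have f2: "finite (insert i (G k))" "insert i (G k) \<subseteq> S" using Gfin GS i by auto
    obtain q where q: "q \<in> Q (insert i (G k))" "(norm q)\<^sup>2 < m (insert i (G k)) + 1 / (real k + 1)"
      using mapprox[OF f2, of "1 / (real k + 1)"] by auto
    have qG: "q \<in> Q (G k)" using q(1) Qanti[of "G k" "insert i (G k)"] by blast
    have "(norm q)\<^sup>2 < d + 1 / (real k + 1)" using q(2) mled[OF f2] by linarith
    then have "(norm (q - p k))\<^sup>2 < 8 / (real k + 1)" by (intro key qG p)
    moreover have "8 / (real k + 1) \<le> 8 / (real N2 + 1)" by (simp add: k_def frac_le)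
    ultimately have "(norm (q - p k))\<^sup>2 < (e/2)\<^sup>2" using N2 by linarith
    then have d1: "norm (q - p k) < e / 2" by (rule power_less_imp_less_base) (use e in simp)
    have d2: "norm (p k - x) < e / 2" using N1 by (simp add: k_def dist_norm)
    have d3: "norm (q - c i) \<le> \<rho> i" using q(1) by (auto simp: Q_def)
    have t1: "norm (x - c i) \<le> norm (x - p k) + norm ((p k - q) + (q - c i))"
      using norm_triangle_ineq[of "x - p k" "(p k - q) + (q - c i)"] by simp
    have t2: "norm ((p k - q) + (q - c i)) \<le> norm (p k - q) + norm (q - c i)" by (rule norm_triangle_ineq)
    have "norm (x - c i) \<le> norm (x - p k) + norm (p k - q) + norm (q - c i)" using t1 t2 by linarith
    then have "norm (x - c i) < e + \<rho> i" using d1 d2 d3 norm_minus_commute[of x "p k"] norm_minus_commute[of "p k" q] by linarith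
    then show False by (simp add: e_def)
  qed
  then show ?thesis by blast
qed

lemma inner_polar4:
  fixes X U :: "'a::real_inner"
  shows "4 * inner X U = (norm (X + U))\<^sup>2 - (norm (X - U))\<^sup>2"
  unfolding power2_norm_eq_inner
  by (simp add: inner_diff_left inner_diff_right inner_add_left inner_add_right inner_commute algebra_simps)

lemma minty:
  fixes G :: "('a::{real_inner,complete_space} \<times> 'a) set"
  assumes mm: "max_monotone G"
  shows "\<exists>x u. (x, u) \<in> G \<and> x + u = w"
proof -
  have mono: "monotone_op G" using mm by (simp add: max_monotone_def)
  define a :: "'a \<times> 'a \<Rightarrow> 'a" where "a = (\<lambda>(y,v). y + v)"
  define b :: "'a \<times> 'a \<Rightarrow> 'a" where "b = (\<lambda>(y,v). y - v)"
  have ne: "\<forall>i\<in>G. \<forall>j\<in>G. norm (b i - b j) \<le> norm (a i - a j)"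
  proof (intro ballI)
    fix i j assume ij: "i \<in> G" "j \<in> G"
    obtain y v y' v' where e: "i = (y, v)" "j = (y', v')" by (cases i, cases j) auto
    have m: "0 \<le> inner (y - y') (v - v')" using mono ij e unfolding monotone_op_def by fastforce
    have "4 * inner (y - y') (v - v') = (norm (a i - a j))\<^sup>2 - (norm (b i - b j))\<^sup>2"
      using inner_polar4[of "y - y'" "v - v'"] by (simp add: e a_def b_def algebra_simps)
    then have "(norm (b i - b j))\<^sup>2 \<le> (norm (a i - a j))\<^sup>2" using m by linarith
    then show "norm (b i - b j) \<le> norm (a i - a j)" by (rule power2_le_imp_le) simp
  qed
  have "\<exists>x. \<forall>i\<in>G. norm (x - b i) \<le> norm (w - a i)"
  proof (rule balls_fip)
    fix F assume "finite F" "F \<subseteq> G"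
    then show "\<exists>x. \<forall>i\<in>F. norm (x - b i) \<le> norm (w - a i)"
      using ne by (intro kirszbraun_finite) auto
  qed
  then obtain c0 where c0: "\<forall>i\<in>G. norm (c0 - b i) \<le> norm (w - a i)" by blast
  define x where "x = (1/2) *\<^sub>R (w + c0)"
  define u where "u = (1/2) *\<^sub>R (w - c0)"
  have xu: "x + u = w"
  proof -
    have "x + u = (1/2) *\<^sub>R ((w + c0) + (w - c0))" unfolding x_def u_def by (rule scaleR_add_right[symmetric])
    also have "(w + c0) + (w - c0) = 2 *\<^sub>R w" by (simp add: scaleR_2)
    finally show ?thesis by simp
  qed
  have xmu: "x - u = c0"
  proof -
    have "x - u = (1/2) *\<^sub>R ((w + c0) - (w - c0))" unfolding x_def u_def by (rule scaleR_diff_right[symmetric])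
    also have "(w + c0) - (w - c0) = 2 *\<^sub>R c0" by (simp add: scaleR_2)
    finally show ?thesis by simp
  qed
  have rel: "0 \<le> inner (x - y) (u - v)" if "(y, v) \<in> G" for y v
  proof -
    have s1: "(x - y) + (u - v) = w - a (y, v)"
    proof -
      have "(x - y) + (u - v) = (x + u) - (y + v)" by (simp add: algebra_simps)
      then show ?thesis using xu by (simp add: a_def)
    qed
    have s2: "(x - y) - (u - v) = c0 - b (y, v)"
    proof -
      have "(x - y) - (u - v) = (x - u) - (y - v)" by (simp add: algebra_simps)
      then show ?thesis using xmu by (simp add: b_def)
    qed
    have "4 * inner (x - y) (u - v) = (norm (w - a (y, v)))\<^sup>2 - (norm (c0 - b (y, v)))\<^sup>2"
      using inner_polar4[of "x - y" "u - v"] unfolding s1 s2 .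
    moreover have "norm (c0 - b (y, v)) \<le> norm (w - a (y, v))" using c0 that by blast
    then have "(norm (c0 - b (y, v)))\<^sup>2 \<le> (norm (w - a (y, v)))\<^sup>2" by (simp add: power_mono)
    ultimately show ?thesis by linarith
  qed
  have "monotone_op (insert (x, u) G)"
    unfolding monotone_op_def
  proof (intro ballI, clarify)
    fix y v y' v' assume a1: "(y, v) \<in> insert (x, u) G" and a2: "(y', v') \<in> insert (x, u) G"
    show "0 \<le> inner (y - y') (v - v')"
    proof (cases "(y, v) = (x, u)")
      case True
      then show ?thesis
      proof (cases "(y', v') = (x, u)")
        case True2: True
        then show ?thesis using True by simp
      next
        case False
        then have "(y', v') \<in> G" using a2 by blast
        then show ?thesis using rel True by simp
      qed
    next
      case False
      then have g1: "(y, v) \<in> G" using a1 by blast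
      show ?thesis
      proof (cases "(y', v') = (x, u)")
        case True
        have "0 \<le> inner (x - y) (u - v)" by (rule rel[OF g1])
        also have "inner (x - y) (u - v) = inner (y - x) (v - u)"
          by (simp add: inner_diff_left inner_diff_right)
        finally show ?thesis using True by simp
      next
        case False
        then have "(y', v') \<in> G" using a2 by blast
        then show ?thesis using mono g1 unfolding monotone_op_def by fastforce
      qed
    qed
  qed
  then have "insert (x, u) G = G" using mm unfolding max_monotone_def by blast
  then have "(x, u) \<in> G" by blast
  with xu show ?thesis by blast
qed

lemma op_scale_mem:
  fixes c :: real
  assumes "c \<noteq> 0"
  shows "(x, u) \<in> op_scale c G \<longleftrightarrow> (x, (1/c) *\<^sub>R u) \<in> G"
proof
  assume "(x, u) \<in> op_scale c G"
  then obtain u0 where "u = c *\<^sub>R u0" "(x, u0) \<in> G" unfolding op_scale_def by blast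
  then show "(x, (1/c) *\<^sub>R u) \<in> G" using assms by simp
next
  assume h: "(x, (1/c) *\<^sub>R u) \<in> G"
  have "u = c *\<^sub>R ((1/c) *\<^sub>R u)" using assms by simp
  then show "(x, u) \<in> op_scale c G" unfolding op_scale_def using h by blast
qed

lemma op_scale_monotone:
  fixes G :: "('a::real_inner \<times> 'a) set"
  assumes c: "c > 0" and mG: "monotone_op G"
  shows "monotone_op (op_scale c G)"
  unfolding monotone_op_def
proof (intro ballI, clarify)
  fix x u y v assume h1: "(x, u) \<in> op_scale c G" and h2: "(y, v) \<in> op_scale c G"
  have cne: "c \<noteq> 0" using c by simp
  have g1: "(x, (1/c) *\<^sub>R u) \<in> G" using h1 op_scale_mem[OF cne] by blast
  have g2: "(y, (1/c) *\<^sub>R v) \<in> G" using h2 op_scale_mem[OF cne] by blast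
  have "0 \<le> inner (x - y) ((1/c) *\<^sub>R u - (1/c) *\<^sub>R v)"
    using mG g1 g2 unfolding monotone_op_def by fastforce
  also have "(1/c) *\<^sub>R u - (1/c) *\<^sub>R v = (1/c) *\<^sub>R (u - v)" by (rule scaleR_diff_right[symmetric])
  also have "inner (x - y) ((1/c) *\<^sub>R (u - v)) = (1/c) * inner (x - y) (u - v)" by (rule inner_scaleR_right)
  finally show "0 \<le> inner (x - y) (u - v)" using c by (simp add: zero_le_divide_iff)
qed

lemma op_scale_max:
  fixes G :: "('a::real_inner \<times> 'a) set"
  assumes c: "c > 0" and mm: "max_monotone G"
  shows "max_monotone (op_scale c G)"
  unfolding max_monotone_def
proof (intro conjI allI impI)
  have cne: "c \<noteq> 0" and cine: "1/c \<noteq> 0" and ci: "1/c > 0" using c by auto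
  have mG: "monotone_op G" using mm by (simp add: max_monotone_def)
  show "monotone_op (op_scale c G)" by (rule op_scale_monotone[OF c mG])
  fix G' assume h: "monotone_op G' \<and> op_scale c G \<subseteq> G'"
  define H where "H = op_scale (1/c) G'"
  have Hm: "monotone_op H" unfolding H_def using h ci op_scale_monotone by blast
  have GH: "G \<subseteq> H"
  proof
    fix p assume p: "p \<in> G"
    obtain x u where e: "p = (x, u)" by (cases p)
    have "(x, (1/c) *\<^sub>R (c *\<^sub>R u)) \<in> G" using p e cne by simp
    then have "(x, c *\<^sub>R u) \<in> op_scale c G" using op_scale_mem[OF cne] by blast
    then have "(x, c *\<^sub>R u) \<in> G'" using h by blast
    moreover have "(1 / (1/c)) *\<^sub>R u = c *\<^sub>R u" by simp
    ultimately have "(x, (1 / (1/c)) *\<^sub>R u) \<in> G'" by simp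
    then have "(x, u) \<in> op_scale (1/c) G'" using op_scale_mem[OF cine] by blast
    then show "p \<in> H" unfolding H_def e .
  qed
  have HG: "H = G" using mm Hm GH unfolding max_monotone_def by blast
  show "G' = op_scale c G"
  proof (intro set_eqI iffI)
    fix p assume p: "p \<in> G'"
    obtain x u where e: "p = (x, u)" by (cases p)
    have "(x, (1 / (1/c)) *\<^sub>R ((1/c) *\<^sub>R u)) \<in> G'" using p e cne by simp
    then have "(x, (1/c) *\<^sub>R u) \<in> H" unfolding H_def using op_scale_mem[OF cine] by blast
    then have "(x, (1/c) *\<^sub>R u) \<in> G" using HG by simp
    then have "(x, u) \<in> op_scale c G" using op_scale_mem[OF cne] by blast
    then show "p \<in> op_scale c G" using e by simp
  next
    fix p assume "p \<in> op_scale c G" then show "p \<in> G'" using h by blast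
  qed
qed

lemma resolvent_props:
  fixes G :: "('a::{real_inner,complete_space} \<times> 'a) set"
  assumes mm: "max_monotone G" and c: "c > 0"
  shows "(resolvent (op_scale c G) v, (1/c) *\<^sub>R (v - resolvent (op_scale c G) v)) \<in> G"
    and "(p, (1/c) *\<^sub>R (v - p)) \<in> G \<Longrightarrow> resolvent (op_scale c G) v = p"
proof -
  have cne: "c \<noteq> 0" using c by simp
  have H: "max_monotone (op_scale c G)" by (rule op_scale_max[OF c mm])
  have Hm: "monotone_op (op_scale c G)" using H by (simp add: max_monotone_def)
  have iff: "(q, v - q) \<in> op_scale c G \<longleftrightarrow> (q, (1/c) *\<^sub>R (v - q)) \<in> G" for q
    by (rule op_scale_mem[OF cne])
  have uniq: "q1 = q2" if q1: "(q1, v - q1) \<in> op_scale c G" and q2: "(q2, v - q2) \<in> op_scale c G" for q1 q2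
  proof -
    have "0 \<le> inner (q1 - q2) ((v - q1) - (v - q2))"
      using Hm q1 q2 unfolding monotone_op_def by fastforce
    also have "(v - q1) - (v - q2) = - (q1 - q2)" by simp
    also have "inner (q1 - q2) (- (q1 - q2)) = - inner (q1 - q2) (q1 - q2)" by (rule inner_minus_right)
    finally have "inner (q1 - q2) (q1 - q2) \<le> 0" by simp
    then have "inner (q1 - q2) (q1 - q2) = 0" using inner_ge_zero[of "q1 - q2"] by linarith
    then have "q1 - q2 = 0" by simp
    then show ?thesis by simp
  qed
  obtain x u where xu: "(x, u) \<in> op_scale c G" "x + u = v" using minty[OF H] by blast
  have "u = v - x" using xu(2) by (simp add: algebra_simps)
  then have ex: "(x, v - x) \<in> op_scale c G" using xu(1) by simp
  have res: "resolvent (op_scale c G) v = x"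
    unfolding resolvent_def
  proof (rule the_equality)
    show "(x, v - x) \<in> op_scale c G" by (rule ex)
    fix q assume "(q, v - q) \<in> op_scale c G" then show "q = x" using uniq ex by blast
  qed
  show "(resolvent (op_scale c G) v, (1/c) *\<^sub>R (v - resolvent (op_scale c G) v)) \<in> G"
    unfolding res using ex iff by blast
  show "resolvent (op_scale c G) v = p" if "(p, (1/c) *\<^sub>R (v - p)) \<in> G"
  proof -
    have "(p, v - p) \<in> op_scale c G" using that iff by blast
    then have "p = x" using uniq ex by blast
    then show ?thesis using res by simp
  qed
qed

lemma dr_contract:
  fixes p q s r :: "'a::real_inner"
  assumes g: "\<gamma> > 0" and k: "\<kappa> > 0" and L: "L \<ge> 0"
    and qL: "norm q \<le> \<gamma> * L * norm p" and pq: "inner p q \<ge> 0"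
    and s: "s = p - q - r" and sr: "\<kappa> * (norm s)\<^sup>2 \<le> inner s r"
  shows "(norm (q + s))\<^sup>2 \<le> (1 - (2 * \<kappa> / (1 + 2 * \<kappa>)) / (1 + \<gamma> * L)\<^sup>2) * (norm (p + q))\<^sup>2"
    and "norm p \<le> norm (p + q)" and "norm (p - s) \<le> norm (p + q)"
proof -
  have r: "r = p - q - s" using s by simp
  have e1: "(norm (p + q))\<^sup>2 = (norm p)\<^sup>2 + 2 * inner p q + (norm q)\<^sup>2"
    unfolding power2_norm_eq_inner by (simp add: inner_add_left inner_add_right inner_commute)
  have e2: "(norm (q + s))\<^sup>2 = (norm q)\<^sup>2 + 2 * inner q s + (norm s)\<^sup>2"
    unfolding power2_norm_eq_inner by (simp add: inner_add_left inner_add_right inner_commute)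
  have e3: "(norm (p - s))\<^sup>2 = (norm p)\<^sup>2 - 2 * inner p s + (norm s)\<^sup>2"
    unfolding power2_norm_eq_inner by (simp add: inner_diff_left inner_diff_right inner_commute)
  have e4: "inner s r = inner p s - inner q s - (norm s)\<^sup>2"
    unfolding r power2_norm_eq_inner by (simp add: inner_diff_left inner_diff_right inner_commute)
  have X: "(norm (p + q))\<^sup>2 - (norm (q + s))\<^sup>2 \<ge> (norm (p - s))\<^sup>2 + 2 * \<kappa> * (norm s)\<^sup>2 + 2 * inner p q"
    using e1 e2 e3 e4 sr by (simp add: algebra_simps)
  have e5: "(1 + 2 * \<kappa>) * ((norm (p - s))\<^sup>2 + 2 * \<kappa> * (norm s)\<^sup>2) - 2 * \<kappa> * (norm p)\<^sup>2
            = (norm (p - (1 + 2 * \<kappa>) *\<^sub>R s))\<^sup>2"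
    unfolding power2_norm_eq_inner by (simp add: inner_diff_left inner_diff_right inner_commute algebra_simps)
  have Y: "(2 * \<kappa> / (1 + 2 * \<kappa>)) * (norm p)\<^sup>2 \<le> (norm (p - s))\<^sup>2 + 2 * \<kappa> * (norm s)\<^sup>2"
  proof -
    have "2 * \<kappa> * (norm p)\<^sup>2 \<le> (1 + 2 * \<kappa>) * ((norm (p - s))\<^sup>2 + 2 * \<kappa> * (norm s)\<^sup>2)"
      using e5 by (metis diff_ge_0_iff_ge zero_le_power2)
    then show ?thesis using k by (simp add: field_simps)
  qed
  have pq_le: "norm (p + q) \<le> (1 + \<gamma> * L) * norm p"
  proof -
    have "norm (p + q) \<le> norm p + norm q" by (rule norm_triangle_ineq)
    then show ?thesis using qL by (simp add: algebra_simps)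
  qed
  have Z: "(norm (p + q))\<^sup>2 / (1 + \<gamma> * L)\<^sup>2 \<le> (norm p)\<^sup>2"
  proof -
    have pos: "(1 + \<gamma> * L) > 0" using g L by (simp add: add_pos_nonneg)
    have "(norm (p + q))\<^sup>2 \<le> ((1 + \<gamma> * L) * norm p)\<^sup>2"
      using pq_le by (intro power_mono) auto
    then have "(norm (p + q))\<^sup>2 \<le> (norm p)\<^sup>2 * (1 + \<gamma> * L)\<^sup>2"
      by (simp add: power_mult_distrib mult.commute)
    then show ?thesis using pos by (simp add: divide_le_eq)
  qed
  define a where "a = 2 * \<kappa> / (1 + 2 * \<kappa>)"
  have a0: "a \<ge> 0" using k by (simp add: a_def)
  have "a * ((norm (p + q))\<^sup>2 / (1 + \<gamma> * L)\<^sup>2) \<le> a * (norm p)\<^sup>2"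
    using Z a0 by (rule mult_left_mono)
  moreover have "(norm (q + s))\<^sup>2 \<le> (norm (p + q))\<^sup>2 - a * (norm p)\<^sup>2"
    using X Y pq by (simp add: a_def)
  ultimately have "(norm (q + s))\<^sup>2 \<le> (norm (p + q))\<^sup>2 - a * ((norm (p + q))\<^sup>2 / (1 + \<gamma> * L)\<^sup>2)"
    by linarith
  then show "(norm (q + s))\<^sup>2 \<le> (1 - (2 * \<kappa> / (1 + 2 * \<kappa>)) / (1 + \<gamma> * L)\<^sup>2) * (norm (p + q))\<^sup>2"
    by (simp add: a_def algebra_simps)
  have "(norm p)\<^sup>2 \<le> (norm (p + q))\<^sup>2" using e1 pq by simp
  then show "norm p \<le> norm (p + q)" by (rule power2_le_imp_le) simp
  have "(norm (p - s))\<^sup>2 \<le> (norm (p + q))\<^sup>2"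
    using X pq k by (smt (verit) zero_le_power2 mult_nonneg_nonneg)
  then show "norm (p - s) \<le> norm (p + q)" by (rule power2_le_imp_le) simp
qed

lemma scale_step:
  fixes p q :: "'a::real_inner"
  assumes g: "\<gamma> > 0" "\<gamma>' > 0" and pq: "inner p q \<ge> 0"
  shows "norm (p + \<gamma>' *\<^sub>R q) \<le> max 1 (\<gamma>' / \<gamma>) * norm (p + \<gamma> *\<^sub>R q)"
proof -
  define M where "M = max 1 (\<gamma>' / \<gamma>)"
  have M1: "M \<ge> 1" by (simp add: M_def)
  have Mg: "M * \<gamma> \<ge> \<gamma>'" using g by (auto simp: M_def max_def field_simps)
  have e: "(norm (p + c *\<^sub>R q))\<^sup>2 = (norm p)\<^sup>2 + 2 * c * inner p q + c\<^sup>2 * (norm q)\<^sup>2" for c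
    unfolding power2_norm_eq_inner by (simp add: inner_add_left inner_add_right inner_commute power2_eq_square)
  have M2: "M\<^sup>2 \<ge> 1" using M1 by (simp add: one_le_power)
  have "M\<^sup>2 * \<gamma> \<ge> M * \<gamma>" using M1 g by (simp add: power2_eq_square)
  then have M3: "M\<^sup>2 * \<gamma> \<ge> \<gamma>'" using Mg by linarith
  have M4: "M\<^sup>2 * \<gamma>\<^sup>2 \<ge> \<gamma>'\<^sup>2"
  proof -
    have "\<gamma>'\<^sup>2 \<le> (M * \<gamma>)\<^sup>2" using Mg g by (intro power_mono) auto
    then show ?thesis by (simp add: power_mult_distrib)
  qed
  have "(norm (p + \<gamma>' *\<^sub>R q))\<^sup>2 \<le> M\<^sup>2 * (norm (p + \<gamma> *\<^sub>R q))\<^sup>2"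
  proof -
    have t1: "(norm p)\<^sup>2 \<le> M\<^sup>2 * (norm p)\<^sup>2" using M2 by (simp add: mult_le_cancel_right1)
    have t2: "2 * \<gamma>' * inner p q \<le> M\<^sup>2 * (2 * \<gamma> * inner p q)"
      using M3 pq by (simp add: mult_right_mono mult.assoc[symmetric] mult.commute[of _ 2] mult.left_commute)
    have t3: "\<gamma>'\<^sup>2 * (norm q)\<^sup>2 \<le> M\<^sup>2 * (\<gamma>\<^sup>2 * (norm q)\<^sup>2)"
      using M4 by (simp add: mult_right_mono mult.assoc[symmetric])
    show ?thesis unfolding e using t1 t2 t3 by (simp add: algebra_simps)
  qed
  also have "\<dots> = (M * norm (p + \<gamma> *\<^sub>R q))\<^sup>2" by (simp add: power_mult_distrib)
  finally show ?thesis unfolding M_def[symmetric] by (rule power2_le_imp_le) (use M1 in simp)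
qed

lemma Rlin_intro:
  fixes a :: "nat \<Rightarrow> 'a::real_normed_vector"
  assumes "0 < r" "r < 1" "\<And>n. norm (a n - l) \<le> C * r ^ n"
  shows "R_linear_conv a l"
proof -
  have "0 \<le> C" using assms(3)[of 0] by (metis norm_ge_zero order_trans power_0 mult.right_neutral)
  then show ?thesis unfolding R_linear_conv_def using assms by blast
qed

lemma Rlin_intro2:
  fixes a :: "nat \<Rightarrow> 'a::real_normed_vector"
  assumes "0 < r1" "r1 < 1" "0 < r2" "r2 < 1" "C1 \<ge> 0" "C2 \<ge> 0"
    "\<And>n. norm (a n - l) \<le> C1 * r1 ^ n + C2 * r2 ^ n"
  shows "R_linear_conv a l"
proof (rule Rlin_intro)
  define r where "r = max r1 r2"
  show "0 < r" "r < 1" using assms by (auto simp: r_def)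
  fix n
  have "r1 ^ n \<le> r ^ n" "r2 ^ n \<le> r ^ n" using assms by (auto simp: r_def intro!: power_mono)
  then have "C1 * r1 ^ n + C2 * r2 ^ n \<le> (C1 + C2) * r ^ n"
    using assms(5,6) by (simp add: distrib_right mult_left_mono add_mono)
  then show "norm (a n - l) \<le> (C1 + C2) * r ^ n" using assms(7)[of n] by linarith
qed

lemma frac_aux:
  fixes a b :: real
  assumes a: "0 < a" and ab: "a \<le> b"
  shows "2 * a / (1 + 2 * a) \<le> 2 * b / (1 + 2 * b)"
proof -
  have b: "0 < b" using a ab by simp
  have e: "2 * t / (1 + 2 * t) = 1 - 1 / (1 + 2 * t)" if "t > 0" for t :: real
    using that by (simp add: field_simps)
  have "1 / (1 + 2 * b) \<le> 1 / (1 + 2 * a)" using a ab by (intro divide_left_mono) auto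
  then show ?thesis using e[OF a] e[OF b] by simp
qed

lemma graph_mem: "(x, u) \<in> graph_of f \<longleftrightarrow> u = f x"
  by (auto simp: graph_of_def)

lemma res_graph:
  fixes f :: "'a::{real_inner,complete_space} \<Rightarrow> 'a"
  assumes mm: "max_monotone (graph_of f)" and c: "c > 0"
  shows "v = resolvent (op_scale c (graph_of f)) v + c *\<^sub>R f (resolvent (op_scale c (graph_of f)) v)"
    and "v = p + c *\<^sub>R f p \<Longrightarrow> resolvent (op_scale c (graph_of f)) v = p"
proof -
  let ?J = "resolvent (op_scale c (graph_of f)) v"
  have "(1/c) *\<^sub>R (v - ?J) = f ?J" using resolvent_props(1)[OF mm c, of v] by (simp add: graph_mem)
  then have "c *\<^sub>R ((1/c) *\<^sub>R (v - ?J)) = c *\<^sub>R f ?J" by simp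
  then have "v - ?J = c *\<^sub>R f ?J" using c by simp
  then show "v = ?J + c *\<^sub>R f ?J" by (simp add: algebra_simps)
  show "resolvent (op_scale c (graph_of f)) v = p" if "v = p + c *\<^sub>R f p"
  proof (rule resolvent_props(2)[OF mm c])
    have "(1/c) *\<^sub>R (v - p) = f p" using that c by simp
    then show "(p, (1/c) *\<^sub>R (v - p)) \<in> graph_of f" by (simp add: graph_mem)
  qed
qed

theorem corollary4p5:
  fixes A1 :: "'a::{real_inner, complete_space} \<Rightarrow> 'a"
    and A2 :: "('a \<times> 'a) set"
    and \<Gamma> :: "real set" and L \<mu> \<gamma>s :: real and \<gamma> :: "nat \<Rightarrow> real"
    and x z y w :: "nat \<Rightarrow> 'a"
  assumes \<Gamma>_pos: "\<Gamma> \<subseteq> {0<..}" and \<Gamma>_ne: "\<Gamma> \<noteq> {}" and \<Gamma>_closed: "closed \<Gamma>"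
    and \<Gamma>_interval: "is_interval \<Gamma>"
    and A1_mono: "max_monotone (graph_of A1)"
    and A1_lip: "L-lipschitz_on UNIV A1"
    and \<mu>_pos: "0 < \<mu>"
    and A2_mono: "max_monotone A2" and A2_strong: "strongly_monotone_op \<mu> A2"
    and P_ne: "zer (op_add (graph_of A1) A2) \<noteq> {}"
    and \<gamma>_in: "\<And>n. \<gamma> n \<in> \<Gamma>" and \<gamma>s_in: "\<gamma>s \<in> \<Gamma>"
    and \<gamma>_conv: "R_linear_conv \<gamma> \<gamma>s"
    and z0: "z 0 = resolvent (op_scale (\<gamma> 0) (graph_of A1)) (x 0)"
    and y_def: "\<And>n. y n = resolvent (op_scale (\<gamma> n) A2) (2 *\<^sub>R z n - x n)"
    and w_def: "\<And>n. w n = x n - z n + y n"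
    and z_def: "\<And>n. z (Suc n) = resolvent (op_scale (\<gamma> n) (graph_of A1)) (w n)"
    and x_def: "\<And>n. x (Suc n) = (\<gamma> (Suc n) / \<gamma> n) *\<^sub>R w n
                                + (1 - \<gamma> (Suc n) / \<gamma> n) *\<^sub>R z (Suc n)"
  shows "\<exists>xl. R_linear_conv x xl \<and> R_linear_conv w xl
          \<and> xl \<in> Fix (\<lambda>u. u - resolvent (op_scale \<gamma>s (graph_of A1)) u
                 + resolvent (op_scale \<gamma>s A2)
                     (2 *\<^sub>R resolvent (op_scale \<gamma>s (graph_of A1)) u - u))
          \<and> (let zl = resolvent (op_scale \<gamma>s (graph_of A1)) xl;
                 g = (1 / \<gamma>s) *\<^sub>R (xl - zl)
             in R_linear_conv z zl \<and> R_linear_conv y zl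
                \<and> zl \<in> zer (op_add (graph_of A1) A2)
                \<and> R_linear_conv (\<lambda>n. (1 / \<gamma> n) *\<^sub>R (x n - z n)) g
                \<and> R_linear_conv (\<lambda>n. (1 / \<gamma> n) *\<^sub>R (w n - y n)) g
                \<and> g \<in> zer (op_diff (op_inv (graph_of A1)) (op_comp_neg (op_inv A2))))"
proof -
  have L0: "L \<ge> 0" using A1_lip by (rule lipschitz_on_nonneg)
  have Lip: "norm (A1 u - A1 v) \<le> L * norm (u - v)" for u v
    using lipschitz_on_normD[OF A1_lip] by simp
  have A1m: "0 \<le> inner (u - v) (A1 u - A1 v)" for u v
    using A1_mono unfolding max_monotone_def monotone_op_def graph_of_def by fastforce
  have A2sm: "\<mu> * (norm (u - v))\<^sup>2 \<le> inner (u - v) (a - b)" if "(u, a) \<in> A2" "(v, b) \<in> A2" for u v a b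
    using A2_strong that unfolding strongly_monotone_op_def by fastforce
  define gmin where "gmin = Inf \<Gamma>"
  have bddG: "bdd_below \<Gamma>" using \<Gamma>_pos by (intro bdd_belowI[of _ 0]) auto
  have gminG: "gmin \<in> \<Gamma>" unfolding gmin_def by (rule closed_contains_Inf[OF \<Gamma>_ne bddG \<Gamma>_closed])
  have gmin0: "gmin > 0" using gminG \<Gamma>_pos by auto
  have gmin_le: "gmin \<le> t" if "t \<in> \<Gamma>" for t unfolding gmin_def using that bddG by (rule cInf_lower)
  have gpos: "\<gamma> n > 0" for n using gmin_le[OF \<gamma>_in[of n]] gmin0 by linarith
  have gspos: "\<gamma>s > 0" using gmin_le[OF \<gamma>s_in] gmin0 by linarith
  obtain Cg rg where Cg: "0 \<le> Cg" "0 < rg" "rg < 1" "\<And>n. norm (\<gamma> n - \<gamma>s) \<le> Cg * rg ^ n"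
    using \<gamma>_conv unfolding R_linear_conv_def by blast
  have gabs: "\<bar>\<gamma> n - \<gamma>s\<bar> \<le> Cg * rg ^ n" for n using Cg(4)[of n] by simp
  define gmax where "gmax = \<gamma>s + Cg"
  have gmax_ge: "\<gamma> n \<le> gmax" for n
  proof -
    have "rg ^ n \<le> 1" using Cg by (simp add: power_le_one)
    then have "Cg * rg ^ n \<le> Cg" using Cg(1) by (simp add: mult_left_le)
    then show ?thesis using gabs[of n] by (simp add: gmax_def)
  qed
  obtain zs where zsP: "zs \<in> zer (op_add (graph_of A1) A2)" using P_ne by blast
  then obtain u v where uv: "0 = u + v" "(zs, u) \<in> graph_of A1" "(zs, v) \<in> A2"
    unfolding zer_def op_add_def by blast
  define gs where "gs = A1 zs"
  have u': "u = gs" using uv(2) by (simp add: graph_mem gs_def)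
  have "v = - gs" using uv(1) u' by (metis add.commute eq_neg_iff_add_eq_0)
  then have zsA2: "(zs, - gs) \<in> A2" using uv(3) by simp
  have Fw: "w n = z (Suc n) + \<gamma> n *\<^sub>R A1 (z (Suc n))" for n
    using res_graph(1)[OF A1_mono gpos[of n], of "w n"] z_def[of n] by simp
  have Fx: "x n = z n + \<gamma> n *\<^sub>R A1 (z n)" for n
  proof (cases n)
    case 0
    then show ?thesis using res_graph(1)[OF A1_mono gpos[of 0], of "x 0"] z0 by simp
  next
    case (Suc m)
    have gm: "\<gamma> m \<noteq> 0" using gpos[of m] by simp
    have "x (Suc m) = (\<gamma> (Suc m) / \<gamma> m) *\<^sub>R (z (Suc m) + \<gamma> m *\<^sub>R A1 (z (Suc m)))
                      + (1 - \<gamma> (Suc m) / \<gamma> m) *\<^sub>R z (Suc m)"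
      using x_def[of m] Fw[of m] by simp
    also have "\<dots> = z (Suc m) + \<gamma> (Suc m) *\<^sub>R A1 (z (Suc m))"
      using gm by (simp add: algebra_simps)
    finally show ?thesis using Suc by simp
  qed
  have Fy: "(y n, (1 / \<gamma> n) *\<^sub>R (2 *\<^sub>R z n - x n - y n)) \<in> A2" for n
    using resolvent_props(1)[OF A2_mono gpos[of n], of "2 *\<^sub>R z n - x n"] y_def[of n] by simp
  define E where "E n = x n - (zs + \<gamma> n *\<^sub>R gs)" for n
  define W where "W n = w n - (zs + \<gamma> n *\<^sub>R gs)" for n
  define \<kappa>0 where "\<kappa>0 = gmin * \<mu>"
  define \<delta> where "\<delta> = (2 * \<kappa>0 / (1 + 2 * \<kappa>0)) / (1 + gmax * L)\<^sup>2"
  have k00: "\<kappa>0 > 0" using gmin0 \<mu>_pos by (simp add: \<kappa>0_def)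
  have gmax0: "gmax > 0" using gpos[of 0] gmax_ge[of 0] by linarith
  have gL0: "1 + gmax * L > 0" using gmax0 L0 by (simp add: add_pos_nonneg)
  have \<delta>0: "\<delta> > 0" unfolding \<delta>_def using k00 gL0 by (intro divide_pos_pos) auto
  have \<delta>1: "\<delta> < 1"
  proof -
    have a1: "2 * \<kappa>0 / (1 + 2 * \<kappa>0) < 1" using k00 by simp
    have a0: "2 * \<kappa>0 / (1 + 2 * \<kappa>0) \<ge> 0" using k00 by simp
    have b1: "(1 + gmax * L)\<^sup>2 \<ge> 1" using gmax0 L0 by (simp add: one_le_power)
    have "2 * \<kappa>0 / (1 + 2 * \<kappa>0) / (1 + gmax * L)\<^sup>2 \<le> 2 * \<kappa>0 / (1 + 2 * \<kappa>0) / 1"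
      by (rule divide_left_mono[OF b1 a0]) (use gL0 in simp)
    then have "\<delta> \<le> 2 * \<kappa>0 / (1 + 2 * \<kappa>0)" unfolding \<delta>_def by simp
    then show ?thesis using a1 by linarith
  qed
  have step1: "(norm (W n))\<^sup>2 \<le> (1 - \<delta>) * (norm (E n))\<^sup>2 \<and> norm (z n - zs) \<le> norm (E n)
               \<and> norm (y n - zs) \<le> 2 * norm (E n)" for n
  proof -
    define g where "g = \<gamma> n"
    have g0: "g > 0" using gpos by (simp add: g_def)
    define p where "p = z n - zs"
    define q where "q = g *\<^sub>R (A1 (z n) - gs)"
    define s where "s = y n - zs"
    define r where "r = (2 *\<^sub>R z n - x n - y n) + g *\<^sub>R gs"
    have xn: "x n = z n + g *\<^sub>R A1 (z n)" using Fx by (simp add: g_def)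
    have qL: "norm q \<le> g * L * norm p"
    proof -
      have "norm q = g * norm (A1 (z n) - A1 zs)" using g0 by (simp add: q_def gs_def)
      also have "\<dots> \<le> g * (L * norm p)" using Lip[of "z n" zs] g0 by (intro mult_left_mono) (auto simp: p_def)
      finally show ?thesis by (simp add: mult.assoc)
    qed
    have pq: "inner p q \<ge> 0" using A1m[of "z n" zs] g0 by (simp add: p_def q_def gs_def zero_le_mult_iff)
    have s_eq: "s = p - q - r" unfolding s_def p_def q_def r_def xn by (simp add: algebra_simps scaleR_2)
    have sr: "(g * \<mu>) * (norm s)\<^sup>2 \<le> inner s r"
    proof -
      have "\<mu> * (norm (y n - zs))\<^sup>2 \<le> inner (y n - zs) ((1 / g) *\<^sub>R (2 *\<^sub>R z n - x n - y n) - - gs)"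
        using A2sm[OF Fy[of n] zsA2] by (simp add: g_def)
      then have "g * (\<mu> * (norm s)\<^sup>2) \<le> g * inner s ((1 / g) *\<^sub>R (2 *\<^sub>R z n - x n - y n) + gs)"
        using g0 by (simp add: s_def)
      also have "g * inner s ((1 / g) *\<^sub>R (2 *\<^sub>R z n - x n - y n) + gs) = inner s r"
        using g0 by (simp add: r_def inner_add_right distrib_left)
      finally show ?thesis by (simp add: mult.assoc)
    qed
    have k: "g * \<mu> > 0" using g0 \<mu>_pos by simp
    note C = dr_contract[OF g0 k L0 qL pq s_eq sr]
    have pqE: "p + q = E n" unfolding p_def q_def E_def xn g_def by (simp add: algebra_simps)
    have qsW: "q + s = W n" unfolding q_def s_def W_def w_def[of n] xn g_def by (simp add: algebra_simps)
    have dn: "\<delta> \<le> (2 * (g * \<mu>) / (1 + 2 * (g * \<mu>))) / (1 + g * L)\<^sup>2"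
      unfolding \<delta>_def
    proof (rule frac_le)
      have "gmin \<le> g" using gmin_le \<gamma>_in by (simp add: g_def)
      then have kk: "\<kappa>0 \<le> g * \<mu>" using \<mu>_pos by (simp add: \<kappa>0_def)
      show "0 \<le> 2 * (g * \<mu>) / (1 + 2 * (g * \<mu>))" using k by simp
      show "2 * \<kappa>0 / (1 + 2 * \<kappa>0) \<le> 2 * (g * \<mu>) / (1 + 2 * (g * \<mu>))"
        by (rule frac_aux[OF k00 kk])
      show "0 < (1 + g * L)\<^sup>2" using g0 L0 by (intro zero_less_power add_pos_nonneg) auto
      have "g \<le> gmax" using gmax_ge by (simp add: g_def)
      then have "1 + g * L \<le> 1 + gmax * L" using L0 by (simp add: mult_right_mono)
      then show "(1 + g * L)\<^sup>2 \<le> (1 + gmax * L)\<^sup>2" using g0 L0 by (intro power_mono) auto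
    qed
    have "(norm (W n))\<^sup>2 \<le> (1 - (2 * (g * \<mu>) / (1 + 2 * (g * \<mu>))) / (1 + g * L)\<^sup>2) * (norm (E n))\<^sup>2"
      using C(1) pqE qsW by simp
    also have "\<dots> \<le> (1 - \<delta>) * (norm (E n))\<^sup>2" using dn by (intro mult_right_mono) auto
    finally have W1: "(norm (W n))\<^sup>2 \<le> (1 - \<delta>) * (norm (E n))\<^sup>2" .
    have Z1: "norm (z n - zs) \<le> norm (E n)" using C(2) pqE by (simp add: p_def)
    have "norm (y n - zs) \<le> norm (z n - zs) + norm (p - s)"
    proof -
      have e: "y n - zs = (z n - zs) - (p - s)" by (simp add: p_def s_def)
      show ?thesis unfolding e by (rule norm_triangle_ineq4)
    qed
    then have Y1: "norm (y n - zs) \<le> 2 * norm (E n)" using Z1 C(3) pqE by simp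
    show ?thesis using W1 Z1 Y1 by blast
  qed
  have step2: "norm (E (Suc n)) \<le> max 1 (\<gamma> (Suc n) / \<gamma> n) * norm (W n)" for n
  proof -
    define p where "p = z (Suc n) - zs"
    define q where "q = A1 (z (Suc n)) - gs"
    have pq: "inner p q \<ge> 0" using A1m[of "z (Suc n)" zs] by (simp add: p_def q_def gs_def)
    have e1: "E (Suc n) = p + \<gamma> (Suc n) *\<^sub>R q" unfolding E_def p_def q_def Fx[of "Suc n"] by (simp add: algebra_simps)
    have e2: "W n = p + \<gamma> n *\<^sub>R q" unfolding W_def p_def q_def Fw[of n] by (simp add: algebra_simps)
    show ?thesis unfolding e1 e2 by (rule scale_step[OF gpos gpos pq])
  qed
  define eps where "eps n = \<bar>\<gamma> (Suc n) - \<gamma> n\<bar> / gmin" for n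
  have eps0: "eps n \<ge> 0" for n using gmin0 by (simp add: eps_def)
  have Mexp: "max 1 (\<gamma> (Suc n) / \<gamma> n) \<le> exp (eps n)" for n
  proof -
    have q1: "\<gamma> (Suc n) / \<gamma> n = 1 + (\<gamma> (Suc n) - \<gamma> n) / \<gamma> n"
      using gpos[of n] by (simp add: field_simps)
    have q2: "(\<gamma> (Suc n) - \<gamma> n) / \<gamma> n \<le> \<bar>\<gamma> (Suc n) - \<gamma> n\<bar> / \<gamma> n"
      using gpos[of n] by (intro divide_right_mono) auto
    have q3: "\<bar>\<gamma> (Suc n) - \<gamma> n\<bar> / \<gamma> n \<le> eps n" unfolding eps_def
      using gmin0 gmin_le[OF \<gamma>_in[of n]] gpos[of n] by (intro divide_left_mono) auto
    have "max 1 (\<gamma> (Suc n) / \<gamma> n) \<le> 1 + eps n" using q1 q2 q3 eps0[of n] by simp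
    also have "\<dots> \<le> exp (eps n)" by simp
    finally show ?thesis .
  qed
  have rec: "(norm (E (Suc n)))\<^sup>2 \<le> exp (2 * eps n) * (1 - \<delta>) * (norm (E n))\<^sup>2" for n
  proof -
    have "norm (E (Suc n)) \<le> exp (eps n) * norm (W n)"
      using step2[of n] mult_right_mono[OF Mexp[of n] norm_ge_zero[of "W n"]] by linarith
    then have "(norm (E (Suc n)))\<^sup>2 \<le> (exp (eps n) * norm (W n))\<^sup>2" by (intro power_mono) auto
    also have "\<dots> = exp (2 * eps n) * (norm (W n))\<^sup>2"
      by (simp only: power_mult_distrib exp_double)
    also have "\<dots> \<le> exp (2 * eps n) * ((1 - \<delta>) * (norm (E n))\<^sup>2)"
      using step1[of n] by (intro mult_left_mono) auto
    finally show ?thesis by (simp add: mult.assoc)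
  qed
  have Ebound: "(norm (E n))\<^sup>2 \<le> (norm (E 0))\<^sup>2 * (1 - \<delta>) ^ n * exp (2 * (\<Sum>k<n. eps k))" for n
  proof (induction n)
    case 0 then show ?case by simp
  next
    case (Suc n)
    have "(norm (E (Suc n)))\<^sup>2 \<le> exp (2 * eps n) * (1 - \<delta>) * (norm (E n))\<^sup>2" by (rule rec)
    also have "\<dots> \<le> exp (2 * eps n) * (1 - \<delta>) * ((norm (E 0))\<^sup>2 * (1 - \<delta>) ^ n * exp (2 * (\<Sum>k<n. eps k)))"
      using Suc.IH \<delta>1 by (intro mult_left_mono) auto
    also have "\<dots> = (norm (E 0))\<^sup>2 * (1 - \<delta>) ^ Suc n * exp (2 * (\<Sum>k<Suc n. eps k))"
      by (simp add: exp_add distrib_left mult_ac)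
    finally show ?case .
  qed
  define Sb where "Sb = 2 * Cg / (gmin * (1 - rg))"
  have epsb: "eps k \<le> 2 * Cg / gmin * rg ^ k" for k
  proof -
    have a1: "\<bar>\<gamma> (Suc k) - \<gamma> k\<bar> \<le> \<bar>\<gamma> (Suc k) - \<gamma>s\<bar> + \<bar>\<gamma> k - \<gamma>s\<bar>" by linarith
    have a2: "\<bar>\<gamma> (Suc k) - \<gamma>s\<bar> \<le> Cg * rg ^ Suc k" "\<bar>\<gamma> k - \<gamma>s\<bar> \<le> Cg * rg ^ k" by (rule gabs)+
    have a3: "Cg * rg ^ Suc k \<le> Cg * rg ^ k" using Cg by (intro mult_left_mono power_decreasing) auto
    have "\<bar>\<gamma> (Suc k) - \<gamma> k\<bar> \<le> 2 * Cg * rg ^ k" using a1 a2 a3 by linarith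
    then have "\<bar>\<gamma> (Suc k) - \<gamma> k\<bar> / gmin \<le> (2 * Cg * rg ^ k) / gmin"
      using gmin0 by (intro divide_right_mono) auto
    then show ?thesis unfolding eps_def by simp
  qed
  have Ssum: "(\<Sum>k<n. eps k) \<le> Sb" for n
  proof -
    have b1: "(\<Sum>k<n. eps k) \<le> (\<Sum>k<n. 2 * Cg / gmin * rg ^ k)" by (intro sum_mono epsb)
    have b2: "(\<Sum>k<n. 2 * Cg / gmin * rg ^ k) = 2 * Cg / gmin * (\<Sum>k<n. rg ^ k)" by (simp add: sum_distrib_left)
    have b3: "(\<Sum>k<n. rg ^ k) = (1 - rg ^ n) / (1 - rg)" using Cg by (simp add: sum_gp_strict)
    have b4: "(1 - rg ^ n) / (1 - rg) \<le> 1 / (1 - rg)" using Cg by (intro divide_right_mono) auto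
    have b5: "2 * Cg / gmin * ((1 - rg ^ n) / (1 - rg)) \<le> 2 * Cg / gmin * (1 / (1 - rg))"
      using Cg gmin0 b4 by (intro mult_left_mono) auto
    have "(\<Sum>k<n. eps k) \<le> 2 * Cg / gmin * (1 / (1 - rg))" using b1 b2 b3 b5 by simp
    then show ?thesis by (simp add: Sb_def)
  qed
  define K where "K = (norm (E 0))\<^sup>2 * exp (2 * Sb)"
  define \<rho> where "\<rho> = max (1/2) (sqrt (1 - \<delta>))"
  have \<rho>: "0 < \<rho>" "\<rho> < 1" using \<delta>0 \<delta>1 by (auto simp: \<rho>_def)
  define Ce where "Ce = sqrt K"
  have Ce0: "Ce \<ge> 0" by (simp add: Ce_def K_def)
  have Eb: "norm (E n) \<le> Ce * \<rho> ^ n" for n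
  proof -
    have "(norm (E n))\<^sup>2 \<le> (norm (E 0))\<^sup>2 * (1 - \<delta>) ^ n * exp (2 * (\<Sum>k<n. eps k))" by (rule Ebound)
    also have "\<dots> \<le> (norm (E 0))\<^sup>2 * (1 - \<delta>) ^ n * exp (2 * Sb)"
      using Ssum[of n] \<delta>1 by (intro mult_left_mono) auto
    finally have "(norm (E n))\<^sup>2 \<le> K * (1 - \<delta>) ^ n" by (simp add: K_def mult_ac)
    also have "\<dots> = (Ce * sqrt (1 - \<delta>) ^ n)\<^sup>2"
    proof -
      have K0: "K \<ge> 0" by (simp add: K_def)
      have c2: "Ce\<^sup>2 = K" unfolding Ce_def using K0 by (rule real_sqrt_pow2)
      have "(sqrt (1 - \<delta>) ^ n)\<^sup>2 = (sqrt (1 - \<delta>) ^ 2) ^ n"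
        by (simp only: power_mult[symmetric] mult.commute)
      also have "sqrt (1 - \<delta>) ^ 2 = 1 - \<delta>" using \<delta>1 by (intro real_sqrt_pow2) simp
      finally have "(sqrt (1 - \<delta>) ^ n)\<^sup>2 = (1 - \<delta>) ^ n" .
      then show ?thesis by (simp add: power_mult_distrib c2)
    qed
    finally have "norm (E n) \<le> Ce * sqrt (1 - \<delta>) ^ n"
      by (rule power2_le_imp_le) (use Ce0 \<delta>1 in \<open>auto intro!: mult_nonneg_nonneg zero_le_power\<close>)
    also have "\<dots> \<le> Ce * \<rho> ^ n" using Ce0 \<delta>1 by (intro mult_left_mono power_mono) (auto simp: \<rho>_def)
    finally show ?thesis .
  qed
  define xl where "xl = zs + \<gamma>s *\<^sub>R gs"
  have J1xl: "resolvent (op_scale \<gamma>s (graph_of A1)) xl = zs"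
    by (rule res_graph(2)[OF A1_mono gspos]) (simp add: xl_def gs_def)
  have J2xl: "resolvent (op_scale \<gamma>s A2) (2 *\<^sub>R zs - xl) = zs"
  proof (rule resolvent_props(2)[OF A2_mono gspos])
    have e: "2 *\<^sub>R zs - xl - zs = - (\<gamma>s *\<^sub>R gs)" by (simp add: xl_def scaleR_2)
    have "(1 / \<gamma>s) *\<^sub>R (2 *\<^sub>R zs - xl - zs) = - gs" unfolding e using gspos by simp
    then show "(zs, (1 / \<gamma>s) *\<^sub>R (2 *\<^sub>R zs - xl - zs)) \<in> A2" using zsA2 by simp
  qed
  have gl: "(1 / \<gamma>s) *\<^sub>R (xl - zs) = gs" using gspos by (simp add: xl_def)
  have Wb: "norm (W n) \<le> norm (E n)" for n
  proof -
    have "(1 - \<delta>) * (norm (E n))\<^sup>2 \<le> (norm (E n))\<^sup>2"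
      using \<delta>0 \<delta>1 by (intro mult_left_le_one_le) auto
    then have "(norm (W n))\<^sup>2 \<le> (norm (E n))\<^sup>2" using step1[of n] by linarith
    then show ?thesis by (rule power2_le_imp_le) simp
  qed
  have Cgs: "0 \<le> Cg * norm gs" using Cg by simp
  have R1: "R_linear_conv x xl"
  proof (rule Rlin_intro2[OF \<rho> Cg(2,3) Ce0 Cgs])
    fix n
    have e: "x n - xl = E n + (\<gamma> n - \<gamma>s) *\<^sub>R gs" by (simp add: E_def xl_def algebra_simps)
    have "norm (x n - xl) \<le> norm (E n) + norm ((\<gamma> n - \<gamma>s) *\<^sub>R gs)" unfolding e by (rule norm_triangle_ineq)
    then have "norm (x n - xl) \<le> norm (E n) + \<bar>\<gamma> n - \<gamma>s\<bar> * norm gs" by simp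
    also have "\<dots> \<le> Ce * \<rho> ^ n + Cg * rg ^ n * norm gs" using Eb gabs by (intro add_mono mult_right_mono) auto
    finally show "norm (x n - xl) \<le> Ce * \<rho> ^ n + Cg * norm gs * rg ^ n" by (simp add: mult_ac)
  qed
  have R2: "R_linear_conv w xl"
  proof (rule Rlin_intro2[OF \<rho> Cg(2,3) Ce0 Cgs])
    fix n
    have e: "w n - xl = W n + (\<gamma> n - \<gamma>s) *\<^sub>R gs" by (simp add: W_def xl_def algebra_simps)
    have "norm (w n - xl) \<le> norm (W n) + norm ((\<gamma> n - \<gamma>s) *\<^sub>R gs)" unfolding e by (rule norm_triangle_ineq)
    then have "norm (w n - xl) \<le> norm (W n) + \<bar>\<gamma> n - \<gamma>s\<bar> * norm gs" by simp
    also have "\<dots> \<le> Ce * \<rho> ^ n + Cg * rg ^ n * norm gs"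
      using Eb Wb gabs by (intro add_mono mult_right_mono) (auto intro: order_trans)
    finally show "norm (w n - xl) \<le> Ce * \<rho> ^ n + Cg * norm gs * rg ^ n" by (simp add: mult_ac)
  qed
  have R3: "xl \<in> Fix (\<lambda>u. u - resolvent (op_scale \<gamma>s (graph_of A1)) u
                 + resolvent (op_scale \<gamma>s A2) (2 *\<^sub>R resolvent (op_scale \<gamma>s (graph_of A1)) u - u))"
    unfolding Fix_def using J1xl J2xl by simp
  have zb: "norm (z n - zs) \<le> norm (E n)" for n using step1[of n] by blast
  have yb: "norm (y n - zs) \<le> 2 * norm (E n)" for n using step1[of n] by blast
  have R4: "R_linear_conv z zs"
  proof (rule Rlin_intro[OF \<rho>])
    fix n show "norm (z n - zs) \<le> Ce * \<rho> ^ n" by (rule order_trans[OF zb Eb])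
  qed
  have R5: "R_linear_conv y zs"
  proof (rule Rlin_intro[OF \<rho>])
    fix n
    have "2 * norm (E n) \<le> 2 * (Ce * \<rho> ^ n)" using Eb[of n] by simp
    then have "norm (y n - zs) \<le> 2 * (Ce * \<rho> ^ n)" by (rule order_trans[OF yb])
    then show "norm (y n - zs) \<le> (2 * Ce) * \<rho> ^ n" by (simp only: mult.assoc)
  qed
  have xz: "(1 / \<gamma> n) *\<^sub>R (x n - z n) = A1 (z n)" for n
  proof -
    have "x n - z n = \<gamma> n *\<^sub>R A1 (z n)" using Fx[of n] by (simp add: algebra_simps)
    then show ?thesis using gpos[of n] by simp
  qed
  have wy: "w n - y n = x n - z n" for n by (simp add: w_def)
  have R6: "R_linear_conv (\<lambda>n. (1 / \<gamma> n) *\<^sub>R (x n - z n)) gs"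
  proof (rule Rlin_intro[OF \<rho>])
    fix n
    have "norm (A1 (z n) - gs) \<le> L * norm (z n - zs)" using Lip[of "z n" zs] by (simp add: gs_def)
    also have "\<dots> \<le> L * (Ce * \<rho> ^ n)" using order_trans[OF zb Eb] L0 by (rule mult_left_mono)
    finally have "norm (A1 (z n) - gs) \<le> L * (Ce * \<rho> ^ n)" .
    then show "norm ((1 / \<gamma> n) *\<^sub>R (x n - z n) - gs) \<le> (L * Ce) * \<rho> ^ n"
      unfolding xz by (simp only: mult.assoc)
  qed
  have R7: "R_linear_conv (\<lambda>n. (1 / \<gamma> n) *\<^sub>R (w n - y n)) gs"
    unfolding wy by (rule R6)
  have R8: "gs \<in> zer (op_diff (op_inv (graph_of A1)) (op_comp_neg (op_inv A2)))"
  proof -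
    have "(zs, gs) \<in> graph_of A1" by (simp add: graph_mem gs_def)
    then have i1: "(gs, zs) \<in> op_inv (graph_of A1)" unfolding op_inv_def by blast
    have "(- gs, zs) \<in> op_inv A2" using zsA2 unfolding op_inv_def by blast
    then have i2: "(gs, zs) \<in> op_comp_neg (op_inv A2)" unfolding op_comp_neg_def by blast
    have "(gs, zs - zs) \<in> op_diff (op_inv (graph_of A1)) (op_comp_neg (op_inv A2))"
      unfolding op_diff_def using i1 i2 by blast
    then show ?thesis by (simp add: zer_def)
  qed
  show ?thesis
    apply (rule exI[of _ xl])
    apply (intro conjI)
      apply (rule R1)
     apply (rule R2)
    apply (rule R3)
    apply (simp only: Let_def J1xl gl)
    apply (intro conjI)
         apply (rule R4)
        apply (rule R5)
       apply (rule zsP)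
      apply (rule R6)
     apply (rule R7)
    apply (rule R8)
    done
qed

end
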